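(* Let $\Bbbk$ be a field, $R=\Bbbk[x_1,\dots,x_m]$ with the standard $\mathbb Z^m$-grading, $M$ a finitely generated torsion-free $\mathbb Z^m$-graded $R$-module, and $\mathcal F_\bullet$ a minimal $\mathbb Z^m$-graded free resolution of $M$ with differentials $f_n$ (and $f_0\colon F_0\to M$ the augmentation). Let $B$ be a homogeneous basis of $\mathcal F_\bullet$ with minimal support. If $n\ge1$ and $y\in F_n$ is a homogeneous element with $\operatorname{supp}f_n(y)=\operatorname{supp}f_n(b)$ for some $b\in B_n$, then there is a nonzero homogeneous $a\in R$ with $a f_n(b)=f_n(y)$. In particular, any two distinct elements of $B_n$ ($n\ge1$) have non-comparable (with respect to inclusion) boundary supports.
   Context: For a complex of free modules $\mathcal F_\bullet$ with differentials $f_n$, $f_0\colon F_0\to H_0(\mathcal F_\bullet)$ the canonical projection, and bases $B_n$ of $F_n$, $B=\coprod B_n$: the support of $y=\sum_{c\in B_n}a_cc$ is $\{c\in B_n:a_c\ne0\}$; $y$ is a cycle with minimal support if $y\in\operatorname{Ker}f_n$ and $\operatorname{supp}y$ does not properly contain the support of any nonzero element of $\operatorname{Ker}f_n$; the boundary support of $y\in F_n$ ($n\ge1$) is $\operatorname{supp}f_n(y)$; $B$ is a basis with minimal support if $f_n(b)$ is a cycle with minimal support for all $n\ge1$, $b\in B_n$. A $\mathbb Z^m$-graded free resolution is minimal if its differentials are homogeneous of degree $0$ and $f_n(F_n)\subseteq(x_1,\dots,x_m)F_{n-1}$ for $n\ge1$. *)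

theory Defs
  imports "HOL-Library.Poly_Mapping"
begin

text \<open>The polynomial ring R = k[x_v : v in 'v] (with 'v a finite type, m = CARD('v)):
  polynomials are finitely supported maps from monomials (exponent vectors) to coefficients.\<close>
type_synonym ('v, 'k) mpoly = "('v \<Rightarrow>\<^sub>0 nat) \<Rightarrow>\<^sub>0 'k"

definition Var :: "'v \<Rightarrow> ('v, 'k::comm_ring_1) mpoly" where
  "Var i = Poly_Mapping.single (Poly_Mapping.single i 1) 1"

definition var_ideal :: "('v::finite, 'k::comm_ring_1) mpoly set" where
  "var_ideal = {p. \<exists>q. p = (\<Sum>i\<in>UNIV. q i * Var i)}"

definition mon_deg :: "('v \<Rightarrow>\<^sub>0 nat) \<Rightarrow> ('v \<Rightarrow> int)" where
  "mon_deg \<mu> = (\<lambda>i. int (Poly_Mapping.lookup \<mu> i))"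

definition homog_poly :: "('v, 'k::zero) mpoly \<Rightarrow> bool" where
  "homog_poly p \<longleftrightarrow> (\<exists>\<alpha>. \<forall>\<mu>\<in>Poly_Mapping.keys p. mon_deg \<mu> = \<alpha>)"

text \<open>The free module F_n is modelled as the finitely supported vectors
  finitely supported maps from 'b to R whose support lies in the basis B n; basis element c is the unit vector at c.\<close>
definition free_mod :: "(nat \<Rightarrow> 'b set) \<Rightarrow> nat \<Rightarrow> ('b \<Rightarrow>\<^sub>0 ('v, 'k::zero) mpoly) set" where
  "free_mod B n = {y. Poly_Mapping.keys y \<subseteq> B n}"

definition vsmult :: "('v, 'k::comm_ring_1) mpoly \<Rightarrow> ('b \<Rightarrow>\<^sub>0 ('v, 'k) mpoly) \<Rightarrow> ('b \<Rightarrow>\<^sub>0 ('v, 'k) mpoly)" where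
  "vsmult a y = Poly_Mapping.map (\<lambda>r. a * r) y"

definition homog_vec_deg :: "('b \<Rightarrow> ('v \<Rightarrow> int)) \<Rightarrow> ('v \<Rightarrow> int) \<Rightarrow> ('b \<Rightarrow>\<^sub>0 ('v, 'k::zero) mpoly) \<Rightarrow> bool" where
  "homog_vec_deg dg \<alpha> y \<longleftrightarrow> (\<forall>c. \<forall>\<mu>\<in>Poly_Mapping.keys (Poly_Mapping.lookup y c). (\<lambda>i. mon_deg \<mu> i + dg c i) = \<alpha>)"

definition homog_vec :: "('b \<Rightarrow> ('v \<Rightarrow> int)) \<Rightarrow> ('b \<Rightarrow>\<^sub>0 ('v, 'k::zero) mpoly) \<Rightarrow> bool" where
  "homog_vec dg y \<longleftrightarrow> (\<exists>\<alpha>. homog_vec_deg dg \<alpha> y)"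

definition dmap :: "(nat \<Rightarrow> 'b \<Rightarrow> ('b \<Rightarrow>\<^sub>0 ('v, 'k::comm_ring_1) mpoly)) \<Rightarrow> nat
    \<Rightarrow> ('b \<Rightarrow>\<^sub>0 ('v, 'k) mpoly) \<Rightarrow> ('b \<Rightarrow>\<^sub>0 ('v, 'k) mpoly)" where
  "dmap d n y = (\<Sum>b\<in>Poly_Mapping.keys y. vsmult (Poly_Mapping.lookup y b) (d n b))"

text \<open>Kernel of f_k: for k \<ge> 1 the kernel of the differential, for k = 0 the kernel of the
  canonical projection F_0 \<rightarrow> H_0 = F_0 / f_1(F_1), i.e. the image of f_1.\<close>
definition ker_f :: "(nat \<Rightarrow> 'b set) \<Rightarrow> (nat \<Rightarrow> 'b \<Rightarrow> ('b \<Rightarrow>\<^sub>0 ('v, 'k::comm_ring_1) mpoly)) \<Rightarrow> nat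
    \<Rightarrow> ('b \<Rightarrow>\<^sub>0 ('v, 'k) mpoly) set" where
  "ker_f B d k = (if k = 0 then dmap d 1 ` free_mod B 1
                  else {y \<in> free_mod B k. dmap d k y = 0})"

definition cycle_min_supp :: "(nat \<Rightarrow> 'b set) \<Rightarrow> (nat \<Rightarrow> 'b \<Rightarrow> ('b \<Rightarrow>\<^sub>0 ('v, 'k::comm_ring_1) mpoly)) \<Rightarrow> nat
    \<Rightarrow> ('b \<Rightarrow>\<^sub>0 ('v, 'k) mpoly) \<Rightarrow> bool" where
  "cycle_min_supp B d k y \<longleftrightarrow> y \<in> ker_f B d k \<and>
     \<not> (\<exists>z \<in> ker_f B d k. z \<noteq> 0 \<and> Poly_Mapping.keys z \<subset> Poly_Mapping.keys y)"

text \<open>(B, deg, d) is a minimal Z^m-graded free resolution of M = F_0 / f_1(F_1).\<close>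
definition min_graded_free_res :: "(nat \<Rightarrow> 'b set) \<Rightarrow> (nat \<Rightarrow> 'b \<Rightarrow> ('v::finite \<Rightarrow> int))
    \<Rightarrow> (nat \<Rightarrow> 'b \<Rightarrow> ('b \<Rightarrow>\<^sub>0 ('v, 'k::comm_ring_1) mpoly)) \<Rightarrow> bool" where
  "min_graded_free_res B dg d \<longleftrightarrow>
     (\<forall>n\<ge>1. \<forall>b\<in>B n. d n b \<in> free_mod B (n - 1)) \<and>
     (\<forall>n\<ge>1. \<forall>b\<in>B n. homog_vec_deg (dg (n - 1)) (dg n b) (d n b)) \<and>
     (\<forall>n\<ge>1. ker_f B d n = dmap d (n + 1) ` free_mod B (n + 1)) \<and>
     (\<forall>n\<ge>1. \<forall>y\<in>free_mod B n. \<forall>c. Poly_Mapping.lookup (dmap d n y) c \<in> var_ideal)"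

definition coker_fin_gen :: "(nat \<Rightarrow> 'b set) \<Rightarrow> (nat \<Rightarrow> 'b \<Rightarrow> ('b \<Rightarrow>\<^sub>0 ('v, 'k::comm_ring_1) mpoly)) \<Rightarrow> bool" where
  "coker_fin_gen B d \<longleftrightarrow> (\<exists>G. finite G \<and> G \<subseteq> free_mod B 0 \<and>
     (\<forall>v\<in>free_mod B 0. \<exists>r w. w \<in> ker_f B d 0 \<and> v = (\<Sum>g\<in>G. vsmult (r g) g) + w))"

definition coker_torsion_free :: "(nat \<Rightarrow> 'b set) \<Rightarrow> (nat \<Rightarrow> 'b \<Rightarrow> ('b \<Rightarrow>\<^sub>0 ('v, 'k::comm_ring_1) mpoly)) \<Rightarrow> bool" where
  "coker_torsion_free B d \<longleftrightarrow> (\<forall>r v. r \<noteq> 0 \<longrightarrow> v \<in> free_mod B 0 \<longrightarrow>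
     vsmult r v \<in> ker_f B d 0 \<longrightarrow> v \<in> ker_f B d 0)"

definition basis_min_supp :: "(nat \<Rightarrow> 'b set) \<Rightarrow> (nat \<Rightarrow> 'b \<Rightarrow> ('b \<Rightarrow>\<^sub>0 ('v, 'k::comm_ring_1) mpoly)) \<Rightarrow> bool" where
  "basis_min_supp B d \<longleftrightarrow> (\<forall>n\<ge>1. \<forall>b\<in>B n. cycle_min_supp B d (n - 1) (d n b))"

end

theory Submission imports Defs begin

lemma lookup_single_mult:
  fixes g :: "('a::cancel_comm_monoid_add) \<Rightarrow>\<^sub>0 ('b::comm_semiring_1)"
  shows "Poly_Mapping.lookup (Poly_Mapping.single m k * g) (m + x) = k * Poly_Mapping.lookup g x"
proof -
  have "Poly_Mapping.lookup (Poly_Mapping.single m k * g) (m + x)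
     = (\<Sum>l. (k when m = l) * (\<Sum>q. Poly_Mapping.lookup g q when m + x = l + q))"
    by (simp add: lookup_mult lookup_single)
  also have "\<dots> = (\<Sum>l. (k * (\<Sum>q. Poly_Mapping.lookup g q when m + x = m + q)) when m = l)"
    by (rule Sum_any.cong) (auto simp: when_def)
  also have "\<dots> = k * (\<Sum>q. Poly_Mapping.lookup g q when m + x = m + q)" by simp
  also have "(\<Sum>q. Poly_Mapping.lookup g q when m + x = m + q) = (\<Sum>q. Poly_Mapping.lookup g q when x = q)"
    by (rule Sum_any.cong) (simp add: when_def)
  also have "\<dots> = Poly_Mapping.lookup g x" by simp
  finally show ?thesis .
qed

lemma keys_single_mult:
  "Poly_Mapping.keys (Poly_Mapping.single m k * g) \<subseteq> {m + x | x. x \<in> Poly_Mapping.keys g}"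
  using keys_mult[of "Poly_Mapping.single m k" g] by (auto split: if_splits)

lemma single_mult_cancel:
  fixes g h :: "('a::cancel_comm_monoid_add) \<Rightarrow>\<^sub>0 ('b::field)"
  assumes "k \<noteq> 0" "Poly_Mapping.single m k * g = Poly_Mapping.single m k * h"
  shows "g = h"
proof (rule poly_mapping_eqI)
  fix x
  have "k * Poly_Mapping.lookup g x = k * Poly_Mapping.lookup h x"
    using assms(2) by (metis lookup_single_mult)
  then show "Poly_Mapping.lookup g x = Poly_Mapping.lookup h x" using assms(1) by simp
qed

lemma single_eq_zero_iff [simp]: "Poly_Mapping.single x c = 0 \<longleftrightarrow> c = 0"
  by (metis lookup_single_eq lookup_zero single_zero)

lemma lookup_vsmult [simp]: "Poly_Mapping.lookup (vsmult a y) c = a * Poly_Mapping.lookup y c"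
  by (simp add: vsmult_def Poly_Mapping.map.rep_eq when_def)

lemma keys_vsmult: "Poly_Mapping.keys (vsmult a y) \<subseteq> Poly_Mapping.keys y"
  by (auto simp: in_keys_iff)

lemma vsmult_one [simp]: "vsmult 1 y = y"
  by (rule poly_mapping_eqI) simp

lemma vsmult_zero [simp]: "vsmult a 0 = 0"
  by (rule poly_mapping_eqI) simp

lemma vsmult_zero_left [simp]: "vsmult 0 y = 0"
  by (rule poly_mapping_eqI) simp

lemma dmap_lookup:
  assumes "finite K" "Poly_Mapping.keys y \<subseteq> K"
  shows "Poly_Mapping.lookup (dmap d n y) c = (\<Sum>b\<in>K. Poly_Mapping.lookup y b * Poly_Mapping.lookup (d n b) c)"
proof -
  have "Poly_Mapping.lookup (dmap d n y) c = (\<Sum>b\<in>Poly_Mapping.keys y. Poly_Mapping.lookup y b * Poly_Mapping.lookup (d n b) c)"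
    by (simp add: dmap_def lookup_sum)
  also have "\<dots> = (\<Sum>b\<in>K. Poly_Mapping.lookup y b * Poly_Mapping.lookup (d n b) c)"
    by (rule sum.mono_neutral_left) (use assms in \<open>auto simp: in_keys_iff\<close>)
  finally show ?thesis .
qed

lemma dmap_comb:
  "dmap d n (vsmult a u - vsmult r v) = vsmult a (dmap d n u) - vsmult r (dmap d n v)"
proof (rule poly_mapping_eqI)
  fix c
  let ?K = "Poly_Mapping.keys u \<union> Poly_Mapping.keys v"
  have k1: "Poly_Mapping.keys (vsmult a u - vsmult r v) \<subseteq> ?K"
    using keys_diff[of "vsmult a u" "vsmult r v"] keys_vsmult[of a u] keys_vsmult[of r v] by blast
  show "Poly_Mapping.lookup (dmap d n (vsmult a u - vsmult r v)) c =
        Poly_Mapping.lookup (vsmult a (dmap d n u) - vsmult r (dmap d n v)) c"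
    by (simp add: dmap_lookup[OF _ k1] dmap_lookup[of ?K u] dmap_lookup[of ?K v] lookup_minus
        sum_subtractf sum_distrib_left algebra_simps)
qed

lemma dmap_single: "dmap d n (Poly_Mapping.single b 1) = d n b"
  by (rule poly_mapping_eqI) (simp add: dmap_lookup[of "{b}"])

lemma free_mod_comb:
  "u \<in> free_mod B k \<Longrightarrow> v \<in> free_mod B k \<Longrightarrow> vsmult a u - vsmult r v \<in> free_mod B k"
  unfolding free_mod_def
  using keys_diff[of "vsmult a u" "vsmult r v"] keys_vsmult[of a u] keys_vsmult[of r v] by blast

lemma ker_comb:
  assumes "u \<in> ker_f B d k" "v \<in> ker_f B d k"
  shows "vsmult a u - vsmult r v \<in> ker_f B d k"
proof (cases "k = 0")
  case True
  then obtain u' v' where "u' \<in> free_mod B 1" "v' \<in> free_mod B 1" "u = dmap d 1 u'" "v = dmap d 1 v'"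
    using assms by (auto simp: ker_f_def)
  moreover have "vsmult a u - vsmult r v = dmap d 1 (vsmult a u' - vsmult r v')"
    using \<open>u = _\<close> \<open>v = _\<close> by (simp add: dmap_comb)
  ultimately show ?thesis using True
    by (simp add: ker_f_def free_mod_comb)
next
  case False
  then show ?thesis using assms by (auto simp: ker_f_def dmap_comb free_mod_comb)
qed


lemma var_ideal_lookup0:
  assumes "(p :: ('v::finite, 'k::comm_ring_1) mpoly) \<in> var_ideal"
  shows "Poly_Mapping.lookup p 0 = 0"
proof -
  obtain q where q: "p = (\<Sum>i\<in>UNIV. q i * Var i)" using assms by (auto simp: var_ideal_def)
  have "Poly_Mapping.lookup (q i * Var i) 0 = 0" for i
  proof -
    have "Poly_Mapping.keys (Var i * q i) \<subseteq> {Poly_Mapping.single i 1 + x | x. x \<in> Poly_Mapping.keys (q i)}"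
      unfolding Var_def by (rule keys_single_mult)
    moreover have "Poly_Mapping.single i (1::nat) + x \<noteq> 0" for x
    proof
      assume "Poly_Mapping.single i (1::nat) + x = 0"
      then have "Poly_Mapping.lookup (Poly_Mapping.single i (1::nat) + x) i = 0" by simp
      then show False by (simp add: lookup_add)
    qed
    ultimately have "0 \<notin> Poly_Mapping.keys (Var i * q i)"
    proof -
      assume a: "Poly_Mapping.keys (Var i * q i) \<subseteq> {Poly_Mapping.single i 1 + x | x. x \<in> Poly_Mapping.keys (q i)}"
        and b: "\<And>x. Poly_Mapping.single i (1::nat) + x \<noteq> 0"
      show ?thesis
      proof
        assume "0 \<in> Poly_Mapping.keys (Var i * q i)"
        with a obtain x where "0 = Poly_Mapping.single i (1::nat) + x" by blast
        with b show False by metis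
      qed
    qed
    then show ?thesis by (simp add: in_keys_iff mult.commute)
  qed
  then show ?thesis by (simp add: q lookup_sum)
qed

lemma Var_mult_in_var_ideal: "Var i * (t :: ('v::finite, 'k::comm_ring_1) mpoly) \<in> var_ideal"
proof -
  have "Var i * t = (\<Sum>j\<in>UNIV. (if j = i then t else 0) * Var j)"
  proof -
    have "(\<Sum>j\<in>UNIV. (if j = i then t else 0) * Var j) = (\<Sum>j\<in>UNIV. if j = i then t * Var j else 0)"
      by (rule sum.cong) auto
    then show ?thesis by (simp add: mult.commute)
  qed
  then show ?thesis unfolding var_ideal_def mem_Collect_eq by (rule exI[of _ "\<lambda>j. if j = i then t else 0"])
qed

lemma not_var_ideal1: "Var i * (t :: ('v::finite, 'k::comm_ring_1) mpoly) - 1 \<notin> var_ideal"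
proof
  assume "Var i * t - 1 \<in> var_ideal"
  then have "Poly_Mapping.lookup (Var i * t - 1) 0 = 0" by (rule var_ideal_lookup0)
  moreover have "Poly_Mapping.lookup (Var i * t) 0 = 0"
    by (rule var_ideal_lookup0[OF Var_mult_in_var_ideal])
  ultimately show False by (simp add: lookup_minus)
qed

lemma not_var_ideal2: "(-1 :: ('v::finite, 'k::comm_ring_1) mpoly) \<notin> var_ideal"
  using not_var_ideal1[of undefined 0] by simp

lemma mon_deg_inj: "mon_deg m = mon_deg m' \<Longrightarrow> m = m'"
  by (rule poly_mapping_eqI) (simp add: mon_deg_def fun_eq_iff)

lemma mon_deg_add: "mon_deg (m + m') = (\<lambda>i. mon_deg m i + mon_deg m' i)"
  by (simp add: mon_deg_def lookup_add fun_eq_iff)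

lemma homog_single:
  assumes "homog_poly p"
  shows "\<exists>m k. p = Poly_Mapping.single m k"
proof (cases "p = 0")
  case True then show ?thesis by (metis single_zero)
next
  case False
  then obtain m where m: "m \<in> Poly_Mapping.keys p" by (metis all_not_in_conv keys_eq_empty)
  obtain \<alpha> where a: "\<forall>\<mu>\<in>Poly_Mapping.keys p. mon_deg \<mu> = \<alpha>"
    using assms unfolding homog_poly_def by blast
  have "Poly_Mapping.keys p = {m}"
  proof
    show "Poly_Mapping.keys p \<subseteq> {m}"
    proof
      fix x assume "x \<in> Poly_Mapping.keys p"
      then have "mon_deg x = mon_deg m" using a m by simp
      then show "x \<in> {m}" using mon_deg_inj by blast
    qed
  qed (use m in auto)
  then have "p = Poly_Mapping.single m (Poly_Mapping.lookup p m)"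
    by (intro poly_mapping_eqI) (auto simp: lookup_single when_def in_keys_iff)
  then show ?thesis by blast
qed

lemma homog_vec_coeff:
  "homog_vec_deg dg \<alpha> v \<Longrightarrow> homog_poly (Poly_Mapping.lookup v c)"
  unfolding homog_vec_deg_def homog_poly_def
  by (rule exI[of _ "\<lambda>i. \<alpha> i - dg c i"]) force

lemma res_free: "min_graded_free_res B dg d \<Longrightarrow> n \<ge> 1 \<Longrightarrow> b \<in> B n \<Longrightarrow> d n b \<in> free_mod B (n - 1)"
  by (simp add: min_graded_free_res_def)

lemma res_homog: "min_graded_free_res B dg d \<Longrightarrow> n \<ge> 1 \<Longrightarrow> b \<in> B n \<Longrightarrow>
   homog_vec_deg (dg (n - 1)) (dg n b) (d n b)"
  by (simp add: min_graded_free_res_def)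

lemma res_exact: "min_graded_free_res B dg d \<Longrightarrow> n \<ge> 1 \<Longrightarrow>
   ker_f B d n = dmap d (n + 1) ` free_mod B (n + 1)"
  by (simp add: min_graded_free_res_def)

lemma res_min: "min_graded_free_res B dg d \<Longrightarrow> n \<ge> 1 \<Longrightarrow> y \<in> free_mod B n \<Longrightarrow>
   Poly_Mapping.lookup (dmap d n y) c \<in> var_ideal"
  by (simp add: min_graded_free_res_def)

lemma ker_coeff_var_ideal:
  assumes "min_graded_free_res B dg d" "n \<ge> 1" "u \<in> ker_f B d n"
  shows "Poly_Mapping.lookup u c \<in> var_ideal"
proof -
  obtain u' where "u' \<in> free_mod B (n + 1)" "u = dmap d (n + 1) u'"
    using assms res_exact[OF assms(1,2)] by auto
  then show ?thesis using res_min[OF assms(1), of "n+1"] by simp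
qed

lemma dmap_in_ker:
  assumes "min_graded_free_res B dg d" "n \<ge> 1" "y \<in> free_mod B n"
  shows "dmap d n y \<in> ker_f B d (n - 1)"
proof (cases "n = 1")
  case True then show ?thesis using assms by (simp add: ker_f_def)
next
  case False
  then have "ker_f B d (n - 1) = dmap d n ` free_mod B n"
    using res_exact[OF assms(1), of "n - 1"] assms(2) by simp
  then show ?thesis using assms by simp
qed

lemma single_free: "b \<in> B n \<Longrightarrow> Poly_Mapping.single b 1 \<in> free_mod B n"
  by (simp add: free_mod_def)

lemma dmap_homog:
  assumes res: "min_graded_free_res B dg d" and n: "n \<ge> 1" and y: "y \<in> free_mod B n"
    and h: "homog_vec (dg n) y"
  shows "homog_poly (Poly_Mapping.lookup (dmap d n y) c)"
proof -
  obtain \<alpha> where ha: "homog_vec_deg (dg n) \<alpha> y" using h by (auto simp: homog_vec_def)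
  have "\<forall>m\<in>Poly_Mapping.keys (Poly_Mapping.lookup (dmap d n y) c). mon_deg m = (\<lambda>i. \<alpha> i - dg (n-1) c i)"
  proof
    fix m assume m: "m \<in> Poly_Mapping.keys (Poly_Mapping.lookup (dmap d n y) c)"
    have "Poly_Mapping.lookup (dmap d n y) c = (\<Sum>b\<in>Poly_Mapping.keys y. Poly_Mapping.lookup y b * Poly_Mapping.lookup (d n b) c)"
      by (simp add: dmap_lookup)
    with m obtain b where b: "b \<in> Poly_Mapping.keys y"
      and mb: "m \<in> Poly_Mapping.keys (Poly_Mapping.lookup y b * Poly_Mapping.lookup (d n b) c)"
      using keys_sum by fastforce
    then obtain m1 m2 where m12: "m = m1 + m2" "m1 \<in> Poly_Mapping.keys (Poly_Mapping.lookup y b)"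
      "m2 \<in> Poly_Mapping.keys (Poly_Mapping.lookup (d n b) c)"
      using keys_mult by blast
    have bB: "b \<in> B n" using b y by (auto simp: free_mod_def)
    have 1: "(\<lambda>i. mon_deg m1 i + dg n b i) = \<alpha>" using ha m12(2) by (auto simp: homog_vec_deg_def)
    have 2: "(\<lambda>i. mon_deg m2 i + dg (n-1) c i) = dg n b"
      using res_homog[OF res n bB] m12(3) by (auto simp: homog_vec_deg_def)
    show "mon_deg m = (\<lambda>i. \<alpha> i - dg (n-1) c i)"
    proof
      fix i
      from fun_cong[OF 1, of i] fun_cong[OF 2, of i]
      show "mon_deg m i = \<alpha> i - dg (n-1) c i" by (simp add: m12(1) mon_deg_add)
    qed
  qed
  then show ?thesis unfolding homog_poly_def by blast
qed


lemma no_var_factor: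
  fixes d :: "nat \<Rightarrow> 'b \<Rightarrow> ('b \<Rightarrow>\<^sub>0 ('v::finite, 'k::field) mpoly)"
  assumes res: "min_graded_free_res B dg d" and tf: "coker_torsion_free B d"
    and n: "n \<ge> 1" and b: "b \<in> B n"
    and w: "w \<in> free_mod B (n - 1)" and fw: "vsmult (Var i) w = d n b"
  shows False
proof -
  have Vne: "Var i \<noteq> (0 :: ('v, 'k) mpoly)"
    unfolding Var_def by (metis lookup_single_eq one_neq_zero lookup_zero)
  have fbker: "d n b \<in> ker_f B d (n - 1)"
    using dmap_in_ker[OF res n single_free[of b B n, OF b]] by (simp add: dmap_single)
  have wker: "w \<in> ker_f B d (n - 1)"
  proof (cases "n = 1")
    case True
    then show ?thesis using tf Vne w fw fbker unfolding coker_torsion_free_def by auto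
  next
    case False
    have "n - 1 \<noteq> 0" using False n by simp
    then have "dmap d (n - 1) (d n b) = 0" using fbker by (simp add: ker_f_def)
    then have "vsmult (Var i) (dmap d (n - 1) w) = vsmult (Var i) 0"
      using dmap_comb[of d "n-1" "Var i" w 0 0] fw by simp
    then have "Var i * Poly_Mapping.lookup (dmap d (n - 1) w) c = Var i * 0" for c
      by (metis lookup_vsmult lookup_zero)
    then have "Poly_Mapping.lookup (dmap d (n - 1) w) c = 0" for c
      unfolding Var_def by (metis single_mult_cancel one_neq_zero)
    then have "dmap d (n - 1) w = 0" by (intro poly_mapping_eqI) simp
    then show ?thesis using False n w by (simp add: ker_f_def)
  qed
  have "w \<in> dmap d n ` free_mod B n"
  proof (cases "n = 1")
    case True then show ?thesis using wker by (simp add: ker_f_def)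
  next
    case False
    then show ?thesis using wker res_exact[OF res, of "n-1"] n by simp
  qed
  then obtain z where z: "z \<in> free_mod B n" "w = dmap d n z" by auto
  let ?u = "vsmult (Var i) z - vsmult 1 (Poly_Mapping.single b 1)"
  have "dmap d n ?u = 0"
    using dmap_comb[of d n "Var i" z 1 "Poly_Mapping.single b 1"] z fw by (simp add: dmap_single)
  moreover have "?u \<in> free_mod B n" using free_mod_comb z single_free[of b B n, OF b] by blast
  ultimately have "?u \<in> ker_f B d n" using n by (simp add: ker_f_def)
  then have "Poly_Mapping.lookup ?u b \<in> var_ideal" by (rule ker_coeff_var_ideal[OF res n])
  then have "Var i * Poly_Mapping.lookup z b - 1 \<in> var_ideal" by (simp add: lookup_minus)
  then show False using not_var_ideal1 by blast
qed


lemma part1: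
  fixes d :: "nat \<Rightarrow> 'b \<Rightarrow> ('b \<Rightarrow>\<^sub>0 ('v::finite, 'k::field) mpoly)"
  assumes res: "min_graded_free_res B dg d" and tf: "coker_torsion_free B d"
    and ms: "basis_min_supp B d"
    and n: "n \<ge> 1" and y: "y \<in> free_mod B n" and b: "b \<in> B n"
    and hy: "homog_vec (dg n) y"
    and ks: "Poly_Mapping.keys (dmap d n y) = Poly_Mapping.keys (d n b)"
  shows "\<exists>a. a \<noteq> 0 \<and> homog_poly a \<and> vsmult a (d n b) = dmap d n y"
proof (cases "d n b = 0")
  case True
  then have "dmap d n y = 0" using ks by simp
  moreover have "homog_poly (1 :: ('v, 'k) mpoly)" by (simp add: homog_poly_def)
  ultimately show ?thesis using True by (intro exI[of _ 1]) simp
next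
  case False
  define fb where "fb = d n b"
  define fy where "fy = dmap d n y"
  obtain c where c: "c \<in> Poly_Mapping.keys fb" using False unfolding fb_def
    by (metis all_not_in_conv keys_eq_empty)
  define p where "p = Poly_Mapping.lookup fb c"
  define q where "q = Poly_Mapping.lookup fy c"
  have p0: "p \<noteq> 0" using c by (simp add: p_def in_keys_iff)
  have "c \<in> Poly_Mapping.keys fy" using c ks by (simp add: fy_def fb_def)
  then have q0: "q \<noteq> 0" by (simp add: q_def in_keys_iff)
  have fyker: "fy \<in> ker_f B d (n - 1)" unfolding fy_def by (rule dmap_in_ker[OF res n y])
  have fbker: "fb \<in> ker_f B d (n - 1)"
    using dmap_in_ker[OF res n single_free[of b B n, OF b]] by (simp add: dmap_single fb_def)
  define z where "z = vsmult p fy - vsmult q fb"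
  have zker: "z \<in> ker_f B d (n - 1)" unfolding z_def by (rule ker_comb[OF fyker fbker])
  have "Poly_Mapping.keys z \<subseteq> Poly_Mapping.keys fb - {c}"
  proof
    fix x assume x: "x \<in> Poly_Mapping.keys z"
    then have "p * Poly_Mapping.lookup fy x \<noteq> q * Poly_Mapping.lookup fb x"
      by (simp add: z_def in_keys_iff lookup_minus)
    then have "Poly_Mapping.lookup fy x \<noteq> 0 \<or> Poly_Mapping.lookup fb x \<noteq> 0" by auto
    then have "x \<in> Poly_Mapping.keys fb" using ks by (auto simp: in_keys_iff fy_def fb_def)
    moreover have "x \<noteq> c"
      using \<open>p * _ \<noteq> _\<close> by (auto simp: p_def q_def mult.commute)
    ultimately show "x \<in> Poly_Mapping.keys fb - {c}" by simp
  qed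
  then have zsub: "Poly_Mapping.keys z \<subset> Poly_Mapping.keys fb" using c by blast
  have "cycle_min_supp B d (n - 1) fb" using ms n b by (simp add: basis_min_supp_def fb_def)
  then have "z = 0" using zker zsub unfolding cycle_min_supp_def by blast
  then have eq: "p * Poly_Mapping.lookup fy x = q * Poly_Mapping.lookup fb x" for x
  proof -
    have "Poly_Mapping.lookup z x = 0" using \<open>z = 0\<close> by simp
    then show ?thesis by (simp add: z_def lookup_minus)
  qed
  have hfb: "homog_poly (Poly_Mapping.lookup fb x)" for x
    unfolding fb_def by (rule homog_vec_coeff[OF res_homog[OF res n b]])
  obtain \<mu> k where pk: "p = Poly_Mapping.single \<mu> k" using homog_single[OF hfb[of c]] p_def by blast
  have k0: "k \<noteq> 0" using p0 pk by auto
  obtain \<nu> l where ql: "q = Poly_Mapping.single \<nu> l"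
    using homog_single[OF dmap_homog[OF res n y hy]] q_def fy_def by blast
  have l0: "l \<noteq> 0" using q0 ql by auto
  show ?thesis
  proof (cases "\<exists>\<delta>. \<nu> = \<mu> + \<delta>")
    case True
    then obtain \<delta> where \<delta>: "\<nu> = \<mu> + \<delta>" by blast
    define a where "a = Poly_Mapping.single \<delta> (l / k)"
    have a0: "a \<noteq> 0" using k0 l0 by (simp add: a_def)
    have ha: "homog_poly a" unfolding homog_poly_def a_def by (rule exI[of _ "mon_deg \<delta>"]) auto
    have ap: "a * p = q" using k0 by (simp add: a_def pk ql mult_single \<delta> add.commute)
    have "vsmult a fb = fy"
    proof (rule poly_mapping_eqI)
      fix x
      have "p * (a * Poly_Mapping.lookup fb x) = p * Poly_Mapping.lookup fy x"
        using eq[of x] ap by (simp add: mult.assoc[symmetric] mult.commute)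
      then show "Poly_Mapping.lookup (vsmult a fb) x = Poly_Mapping.lookup fy x"
        using single_mult_cancel[OF k0] pk by simp
    qed
    then show ?thesis using a0 ha by (auto simp: fb_def fy_def)
  next
    case False
    have "\<exists>i. Poly_Mapping.lookup \<nu> i < Poly_Mapping.lookup \<mu> i"
    proof (rule ccontr)
      assume "\<not> ?thesis"
      then have "\<nu> = \<mu> + (\<nu> - \<mu>)"
        by (intro poly_mapping_eqI) (auto simp: lookup_add lookup_minus not_less)
      then show False using False by blast
    qed
    then obtain i where i: "Poly_Mapping.lookup \<nu> i < Poly_Mapping.lookup \<mu> i" by blast
    have fac: "\<exists>s. Poly_Mapping.lookup fb x = Var i * s" for x
    proof (cases "Poly_Mapping.lookup fb x = 0")
      case True then show ?thesis by (intro exI[of _ 0]) simp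
    next
      case False
      obtain \<mu>' k' where mk': "Poly_Mapping.lookup fb x = Poly_Mapping.single \<mu>' k'"
        using homog_single[OF hfb[of x]] by blast
      have k'0: "k' \<noteq> 0" using False mk' by auto
      have "q * Poly_Mapping.lookup fb x = Poly_Mapping.single (\<nu> + \<mu>') (l * k')"
        by (simp add: ql mk' mult_single)
      then have "Poly_Mapping.single \<mu> k * Poly_Mapping.lookup fy x = Poly_Mapping.single (\<nu> + \<mu>') (l * k')"
        using eq[of x] pk by simp
      moreover have "\<nu> + \<mu>' \<in> Poly_Mapping.keys (Poly_Mapping.single (\<nu> + \<mu>') (l * k'))"
        using k'0 l0 by simp
      ultimately obtain x' where x': "\<nu> + \<mu>' = \<mu> + x'"
        using keys_single_mult[of \<mu> k "Poly_Mapping.lookup fy x"] by auto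
      have "Poly_Mapping.lookup \<nu> i + Poly_Mapping.lookup \<mu>' i = Poly_Mapping.lookup \<mu> i + Poly_Mapping.lookup x' i"
        using arg_cong[OF x', of "\<lambda>m. Poly_Mapping.lookup m i"] by (simp add: lookup_add)
      then have ge: "Poly_Mapping.lookup \<mu>' i \<ge> 1" using i by linarith
      define \<rho> where "\<rho> = \<mu>' - Poly_Mapping.single i 1"
      have "\<mu>' = Poly_Mapping.single i 1 + \<rho>"
        using ge by (intro poly_mapping_eqI) (auto simp: \<rho>_def lookup_add lookup_minus lookup_single when_def)
      then have "Var i * Poly_Mapping.single \<rho> k' = Poly_Mapping.lookup fb x"
        by (simp add: Var_def mult_single mk')
      then show ?thesis by metis
    qed
    define w where "w = Poly_Mapping.map (\<lambda>r. SOME s. r = Var i * s) fb"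
    have lw: "Poly_Mapping.lookup w x = ((SOME s. Poly_Mapping.lookup fb x = Var i * s) when Poly_Mapping.lookup fb x \<noteq> 0)" for x
      by (simp add: w_def Poly_Mapping.map.rep_eq)
    have wfb: "vsmult (Var i) w = fb"
    proof (rule poly_mapping_eqI)
      fix x
      show "Poly_Mapping.lookup (vsmult (Var i) w) x = Poly_Mapping.lookup fb x"
      proof (cases "Poly_Mapping.lookup fb x = 0")
        case True then show ?thesis by (simp add: lw)
      next
        case False
        then show ?thesis using someI_ex[OF fac[of x]] by (simp add: lw)
      qed
    qed
    have "Poly_Mapping.keys w \<subseteq> Poly_Mapping.keys fb" by (auto simp: in_keys_iff lw)
    moreover have "fb \<in> free_mod B (n - 1)" unfolding fb_def by (rule res_free[OF res n b])
    ultimately have wfree: "w \<in> free_mod B (n - 1)" by (auto simp: free_mod_def)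
    show ?thesis using no_var_factor[OF res tf n b wfree] wfb fb_def by blast
  qed
qed


theorem mainTheorem5:
  fixes B :: "nat \<Rightarrow> 'b set"
    and dg :: "nat \<Rightarrow> 'b \<Rightarrow> ('v::finite \<Rightarrow> int)"
    and d :: "nat \<Rightarrow> 'b \<Rightarrow> ('b \<Rightarrow>\<^sub>0 ('v, 'k::field) mpoly)"
  assumes res: "min_graded_free_res B dg d"
    and fg: "coker_fin_gen B d"
    and tf: "coker_torsion_free B d"
    and ms: "basis_min_supp B d"
  shows "(\<forall>n\<ge>1. \<forall>y\<in>free_mod B n. \<forall>b\<in>B n.
            homog_vec (dg n) y \<longrightarrow> Poly_Mapping.keys (dmap d n y) = Poly_Mapping.keys (d n b) \<longrightarrow>
            (\<exists>a. a \<noteq> 0 \<and> homog_poly a \<and> vsmult a (d n b) = dmap d n y))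
       \<and> (\<forall>n\<ge>1. \<forall>b\<in>B n. \<forall>b'\<in>B n. b \<noteq> b' \<longrightarrow> \<not> Poly_Mapping.keys (d n b) \<subseteq> Poly_Mapping.keys (d n b'))"
proof (intro conjI allI impI ballI notI)
  fix n y b
  assume "n \<ge> 1" "y \<in> free_mod B n" "b \<in> B n" "homog_vec (dg n) y"
    "Poly_Mapping.keys (dmap d n y) = Poly_Mapping.keys (d n b)"
  then show "\<exists>a. a \<noteq> 0 \<and> homog_poly a \<and> vsmult a (d n b) = dmap d n y"
    using part1[OF res tf ms] by blast
next
  fix n b b'
  assume n: "n \<ge> 1" and b: "b \<in> B n" and b': "b' \<in> B n" and bb: "b \<noteq> b'"
    and sub: "Poly_Mapping.keys (d n b) \<subseteq> Poly_Mapping.keys (d n b')"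
  have sb: "Poly_Mapping.single b 1 \<in> free_mod B n" by (rule single_free[of b B n, OF b])
  have sb': "Poly_Mapping.single b' 1 \<in> free_mod B n" by (rule single_free[of b' B n, OF b'])
  have fb0: "d n b \<noteq> 0"
  proof
    assume "d n b = 0"
    then have "Poly_Mapping.single b 1 \<in> ker_f B d n" using n sb
      by (simp add: ker_f_def dmap_single)
    then have "Poly_Mapping.lookup (Poly_Mapping.single b (1 :: ('v, 'k) mpoly)) b \<in> var_ideal"
      using ker_coeff_var_ideal[OF res n] by blast
    then have "(1 :: ('v, 'k) mpoly) \<in> var_ideal" by simp
    then show False using var_ideal_lookup0 by fastforce
  qed
  have fbker: "d n b \<in> ker_f B d (n - 1)"
    using dmap_in_ker[OF res n sb] by (simp add: dmap_single)
  have "cycle_min_supp B d (n - 1) (d n b')" using ms n b' by (simp add: basis_min_supp_def)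
  then have "\<not> Poly_Mapping.keys (d n b) \<subset> Poly_Mapping.keys (d n b')"
    using fbker fb0 unfolding cycle_min_supp_def by blast
  with sub have ks: "Poly_Mapping.keys (dmap d n (Poly_Mapping.single b' 1)) = Poly_Mapping.keys (d n b)"
    by (auto simp: dmap_single)
  have hy: "homog_vec (dg n) (Poly_Mapping.single b' 1 :: 'b \<Rightarrow>\<^sub>0 ('v, 'k) mpoly)"
    unfolding homog_vec_def homog_vec_deg_def
    by (rule exI[of _ "dg n b'"]) (auto simp: lookup_single when_def mon_deg_def)
  obtain a where a: "vsmult a (d n b) = d n b'"
    using part1[OF res tf ms n sb' b hy ks] by (auto simp: dmap_single)
  define u where "u = vsmult a (Poly_Mapping.single b 1) - vsmult 1 (Poly_Mapping.single b' 1)"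
  have "dmap d n u = 0" using a unfolding u_def dmap_comb by (simp add: dmap_single)
  moreover have "u \<in> free_mod B n" unfolding u_def by (rule free_mod_comb[OF sb sb'])
  ultimately have "u \<in> ker_f B d n" using n by (simp add: ker_f_def)
  then have "Poly_Mapping.lookup u b' \<in> var_ideal" by (rule ker_coeff_var_ideal[OF res n])
  then have "(-1 :: ('v, 'k) mpoly) \<in> var_ideal"
    using bb by (simp add: u_def lookup_minus lookup_single)
  then show False using not_var_ideal2 by blast
qed

end
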